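(* Let $V(x)=x(1+xU(x))$, where $U$ is absolutely monotonic on some interval $(0,R)$ (i.e. $U$ has a power series expansion $U(x)=a_1+a_2x+a_3x^2+\dots$ with non-negative coefficients there). Define $s(z)=\exp\left(\int\frac{dz}{V(z)}\right)$ and $b(z)=\exp\left(\int\frac{z\,dz}{V(z)}\right)$ (with arbitrary fixed antiderivatives). Then $V$ is the covariance of the power series distribution of the function $\omega(y)=b(s^{-1}(y))$.
   Context: For a power series $\omega(y)=\sum_k a_ky^k$ with non-negative coefficients and positive radius of convergence, the power series distribution (PSD) of $\omega$ with parameter $y>0$ is the law on $\{0,1,2,\dots\}$ given by $P\{\xi=k\}=a_ky^k/\omega(y)$. Its mean is $x(y)=y\omega'(y)/\omega(y)$ and its variance is $y\,x'(y)>0$, so $x(\cdot)$ has an inverse $y=f(x)$ on its range. The covariance of the PSD of $\omega$ is the function $V(x)=f(x)/f'(x)$, i.e. the variance expressed as a function of the mean $x$. Here $s^{-1}$ denotes the inverse function of $s$. *)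

theory Defs
  imports "HOL-Analysis.Analysis"
begin

definition ps_fun :: "(nat \<Rightarrow> real) \<Rightarrow> real \<Rightarrow> real" where
  "ps_fun c y = (\<Sum>k. c k * y ^ k)"

definition psd_mean :: "(nat \<Rightarrow> real) \<Rightarrow> real \<Rightarrow> real" where
  "psd_mean c y = y * deriv (ps_fun c) y / ps_fun c y"

definition psd_cov :: "(nat \<Rightarrow> real) \<Rightarrow> real \<Rightarrow> real \<Rightarrow> real" where
  "psd_cov c r x =
     (let f = the_inv_into {0<..<r} (psd_mean c) in f x / deriv f x)"

end

theory Submission
  imports Defs "HOL-Computational_Algebra.Formal_Power_Series"
begin

unbundle no vec_syntax
notation fps_nth (infixl \<open>$\<close> 75)


definition equpto :: "nat \<Rightarrow> real fps \<Rightarrow> real fps \<Rightarrow> bool" where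
  "equpto m F G \<longleftrightarrow> (\<forall>i\<le>m. F $ i = G $ i)"

lemma equpto_mult:
  assumes "equpto m F F'" "equpto m G G'"
  shows "equpto m (F * G) (F' * G')"
  unfolding equpto_def
proof (intro allI impI)
  fix n assume n: "n \<le> m"
  show "(F * G) $ n = (F' * G') $ n"
    unfolding fps_mult_nth
    by (rule sum.cong) (use assms n in \<open>auto simp: equpto_def\<close>)
qed

lemma equpto_power:
  assumes "equpto m F G"
  shows "equpto m (F ^ k) (G ^ k)"
  by (induction k) (auto simp: equpto_def intro!: equpto_mult[OF assms, unfolded equpto_def])

lemma equpto_X:
  assumes "equpto m F G"
  shows "equpto m (fps_X * F) (fps_X * G)"
  using assms by (auto simp: equpto_def)

lemma equpto_compose:
  assumes "equpto m F G"
  shows "equpto m (A oo F) (A oo G)"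
  unfolding equpto_def fps_compose_nth
proof (intro allI impI)
  fix n assume n: "n \<le> m"
  show "(\<Sum>i = 0..n. A $ i * (F ^ i) $ n) = (\<Sum>i = 0..n. A $ i * (G ^ i) $ n)"
    using equpto_power[OF assms] n by (auto simp: equpto_def intro!: sum.cong)
qed

definition RHS :: "(nat \<Rightarrow> real) \<Rightarrow> real fps \<Rightarrow> real fps" where
  "RHS a F = F ^ 2 * (Abs_fps a oo (fps_X * F))"

lemma equpto_RHS:
  assumes "equpto m F G"
  shows "equpto m (RHS a F) (RHS a G)"
  unfolding RHS_def
  by (intro equpto_mult equpto_power equpto_compose equpto_X assms)

definition Phi :: "(nat \<Rightarrow> real) \<Rightarrow> (nat \<Rightarrow> real) \<Rightarrow> nat \<Rightarrow> real" where
  "Phi a h n = (if n = 0 then 1 else RHS a (Abs_fps h) $ (n - 1) / real n)"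

lemma Phi_local:
  assumes "\<forall>i<n. h i = g i"
  shows "Phi a h n = Phi a g n"
proof (cases n)
  case (Suc m)
  have "equpto m (Abs_fps h) (Abs_fps g)" using assms Suc by (auto simp: equpto_def)
  from equpto_RHS[OF this, of a] show ?thesis using Suc by (simp add: Phi_def equpto_def)
qed (simp add: Phi_def)

lemma fix_local:
  fixes \<Phi> :: "(nat \<Rightarrow> 'b) \<Rightarrow> nat \<Rightarrow> 'b" and z :: "nat \<Rightarrow> 'b"
  assumes loc: "\<And>h g n. \<forall>i<n. h i = g i \<Longrightarrow> \<Phi> h n = \<Phi> g n"
  defines "it \<equiv> \<lambda>m. (\<Phi> ^^ m) z"
  shows "\<Phi> (\<lambda>n. it (Suc n) n) n = it (Suc n) n"
proof -
  have Q: "\<forall>i<m. it (Suc m) i = it m i" for m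
  proof (induction m)
    case (Suc m)
    show ?case
    proof (intro allI impI)
      fix i assume i: "i < Suc m"
      have "it (Suc (Suc m)) i = \<Phi> (it (Suc m)) i" by (simp add: it_def)
      also have "\<dots> = \<Phi> (it m) i" using Suc i by (intro loc) auto
      also have "\<dots> = it (Suc m) i" by (simp add: it_def)
      finally show "it (Suc (Suc m)) i = it (Suc m) i" .
    qed
  qed simp
  have P: "it (i + Suc k) i = it (Suc i) i" for i k
    by (induction k) (use Q in \<open>auto\<close>)
  have "\<Phi> (\<lambda>n. it (Suc n) n) n = \<Phi> (it (Suc n)) n"
  proof (intro loc allI impI)
    fix i assume "i < n"
    then obtain k where "Suc n = i + Suc k" by (metis add_Suc_right less_imp_Suc_add)
    then show "it (Suc i) i = it (Suc n) i" using P by metis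
  qed
  also have "\<dots> = it (Suc (Suc n)) n" by (simp add: it_def)
  also have "\<dots> = it (Suc n) n" using Q by auto
  finally show ?thesis .
qed

definition hs :: "(nat \<Rightarrow> real) \<Rightarrow> nat \<Rightarrow> real" where
  "hs a n = ((Phi a ^^ Suc n) (\<lambda>_. 0)) n"

lemma hs_fix: "Phi a (hs a) n = hs a n"
  unfolding hs_def by (rule fix_local[OF Phi_local])

lemma hs_0: "hs a 0 = 1"
  using hs_fix[of a 0] by (simp add: Phi_def)

lemma hs_Suc: "real (Suc n) * hs a (Suc n) = RHS a (Abs_fps (hs a)) $ n"
  using hs_fix[of a "Suc n"] by (simp add: Phi_def field_simps)

definition nnf :: "real fps \<Rightarrow> bool" where "nnf F \<longleftrightarrow> (\<forall>n. F $ n \<ge> 0)"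

lemma nnf_mult: "nnf F \<Longrightarrow> nnf G \<Longrightarrow> nnf (F * G)"
  by (auto simp: nnf_def fps_mult_nth intro!: sum_nonneg)

lemma nnf_one: "nnf 1"
  by (auto simp: nnf_def)

lemma nnf_power: "nnf F \<Longrightarrow> nnf (F ^ k)"
  by (induction k) (auto intro: nnf_mult nnf_one)

lemma nnf_X: "nnf F \<Longrightarrow> nnf (fps_X * F)"
  by (auto simp: nnf_def)

lemma nnf_compose: "nnf A \<Longrightarrow> nnf F \<Longrightarrow> nnf (A oo F)"
  using nnf_power[of F] by (auto simp: nnf_def fps_compose_nth intro!: sum_nonneg)

lemma nnf_RHS: "(\<And>k. a k \<ge> 0) \<Longrightarrow> nnf F \<Longrightarrow> nnf (RHS a F)"
  unfolding RHS_def by (intro nnf_mult nnf_power nnf_compose nnf_X) (auto simp: nnf_def)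

lemma hs_nonneg:
  assumes "\<And>k. a k \<ge> 0"
  shows "hs a n \<ge> 0"
proof (induction n rule: less_induct)
  case (less n)
  show ?case
  proof (cases n)
    case 0 then show ?thesis by (simp add: hs_0)
  next
    case (Suc m)
    define g where "g = (\<lambda>i. if i < n then hs a i else 0)"
    have "hs a n = Phi a (hs a) n" by (simp add: hs_fix)
    also have "\<dots> = Phi a g n" by (intro Phi_local) (auto simp: g_def)
    also have "\<dots> \<ge> 0"
    proof -
      have "nnf (Abs_fps g)" using less by (auto simp: nnf_def g_def)
      then have "nnf (RHS a (Abs_fps g))" by (intro nnf_RHS assms)
      then show ?thesis using Suc by (auto simp: Phi_def nnf_def)
    qed
    finally show ?thesis .
  qed
qed



lemma sums_fps_mult:
  fixes y :: real
  assumes "nnf F" "nnf G" "y \<ge> 0"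
    and "(\<lambda>n. F $ n * y ^ n) sums P" "(\<lambda>n. G $ n * y ^ n) sums Q"
  shows "(\<lambda>n. (F * G) $ n * y ^ n) sums (P * Q)"
proof -
  have nn1: "F $ n * y ^ n \<ge> 0" "G $ n * y ^ n \<ge> 0" for n
    using assms by (auto simp: nnf_def)
  have s1: "summable (\<lambda>n. norm (F $ n * y ^ n))" "summable (\<lambda>n. norm (G $ n * y ^ n))"
    using assms(4,5) nn1 by (auto simp: sums_iff)
  from Cauchy_product_sums[OF s1]
  have "(\<lambda>k. \<Sum>i\<le>k. F $ i * y ^ i * (G $ (k - i) * y ^ (k - i))) sums
         ((\<Sum>n. F $ n * y ^ n) * (\<Sum>n. G $ n * y ^ n))" .
  moreover have "(\<Sum>i\<le>k. F $ i * y ^ i * (G $ (k - i) * y ^ (k - i))) = (F * G) $ k * y ^ k" for k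
  proof -
    have "(\<Sum>i\<le>k. F $ i * y ^ i * (G $ (k - i) * y ^ (k - i))) =
          (\<Sum>i=0..k. F $ i * G $ (k - i) * y ^ k)"
    proof (unfold atMost_atLeast0, rule sum.cong)
      fix i assume "i \<in> {0..k}"
      then have "y ^ i * y ^ (k - i) = y ^ k" by (simp flip: power_add)
      then show "F $ i * y ^ i * (G $ (k - i) * y ^ (k - i)) = F $ i * G $ (k - i) * y ^ k"
        by (metis mult.assoc mult.left_commute)
    qed simp
    also have "\<dots> = (F * G) $ k * y ^ k"
      by (simp add: fps_mult_nth sum_distrib_right)
    finally show ?thesis .
  qed
  ultimately show ?thesis using assms(4,5) by (simp add: sums_iff)
qed

lemma sums_fps_one: "(\<lambda>n. (1 :: real fps) $ n * y ^ n) sums 1"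
proof -
  have "(\<lambda>n. (1 :: real fps) $ n * y ^ n) = (\<lambda>n. if n = 0 then (\<lambda>_. 1::real) n else 0)"
    by auto
  then show ?thesis using sums_single[of 0 "\<lambda>_. 1::real"] by simp
qed

lemma sums_fps_power:
  fixes y :: real
  assumes "nnf F" "y \<ge> 0" "(\<lambda>n. F $ n * y ^ n) sums P"
  shows "(\<lambda>n. (F ^ k) $ n * y ^ n) sums (P ^ k)"
proof (induction k)
  case 0 then show ?case using sums_fps_one by simp
next
  case (Suc k)
  then show ?case using sums_fps_mult[OF assms(1) nnf_power[OF assms(1)] assms(2) assms(3) Suc]
    by simp
qed

lemma sums_fps_X:
  fixes y :: real
  assumes "(\<lambda>n. F $ n * y ^ n) sums P"
  shows "(\<lambda>n. (fps_X * F) $ n * y ^ n) sums (y * P)"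
proof -
  have "(\<lambda>n. (fps_X * F) $ (Suc n) * y ^ (Suc n)) sums (y * P)"
    using sums_mult[OF assms, of y] by (simp add: algebra_simps)
  then show ?thesis by (subst (asm) sums_Suc_iff) simp
qed

lemma sums_fps_compose:
  fixes y g f :: real
  assumes "nnf A" "nnf G" "G $ 0 = 0" "y \<ge> 0"
    and "(\<lambda>n. G $ n * y ^ n) sums g" "(\<lambda>k. A $ k * g ^ k) sums f"
  shows "(\<lambda>n. (A oo G) $ n * y ^ n) sums f"
proof -
  define ff where "ff = (\<lambda>(k, n). A $ k * (G ^ k) $ n * y ^ n)"
  have nn: "ff (k, n) \<ge> 0" for k n
    using assms nnf_power[OF assms(2), of k] by (auto simp: ff_def nnf_def)
  have h1: "((\<lambda>n. ff (k, n)) has_sum (A $ k * g ^ k)) UNIV" for k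
  proof (rule sums_nonneg_imp_has_sum)
    show "(\<lambda>n. ff (k, n)) sums (A $ k * g ^ k)"
      using sums_mult[OF sums_fps_power[OF assms(2,4,5), of k], of "A $ k"]
      by (simp add: ff_def algebra_simps)
  qed (use nn in auto)
  have h2: "((\<lambda>k. A $ k * g ^ k) has_sum f) UNIV"
  proof (rule sums_nonneg_imp_has_sum[OF assms(6)])
    fix k
    have "g \<ge> 0"
      by (rule sums_le[OF _ sums_zero assms(5)]) (use assms(2,4) in \<open>auto simp: nnf_def\<close>)
    then show "A $ k * g ^ k \<ge> 0" using assms(1) by (auto simp: nnf_def)
  qed
  have "(ff has_sum f) (Sigma UNIV (\<lambda>_. UNIV))"
  proof (rule has_sum_SigmaI[OF _ h2])
    show "ff summable_on Sigma UNIV (\<lambda>_. UNIV)"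
      using summable_on_SigmaI[where f=ff and A=UNIV and B="\<lambda>_. UNIV", OF h1 has_sum_imp_summable[OF h2] nn] .
  qed (rule h1)
  then have "((\<lambda>(n, k). ff (k, n)) has_sum f) (UNIV \<times> UNIV)"
    using has_sum_swap[where f=ff and S=f and A=UNIV and B=UNIV] by simp
  moreover have "((\<lambda>k. ff (k, n)) has_sum ((A oo G) $ n * y ^ n)) UNIV" for n
  proof -
    have "((\<lambda>k. ff (k, n)) has_sum (\<Sum>k\<in>{0..n}. ff (k, n))) {0..n}"
      by (rule has_sum_finite) simp
    moreover have z: "ff (k, n) = 0" if "k \<notin> {0..n}" for k
    proof -
      have "(G ^ k) $ n = 0" using startsby_zero_power_prefix[OF assms(3), of k] that by auto
      then show "ff (k, n) = 0" by (simp add: ff_def)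
    qed
    ultimately have "((\<lambda>k. ff (k, n)) has_sum (\<Sum>k\<in>{0..n}. ff (k, n))) UNIV"
      using has_sum_cong_neutral[of UNIV "{0..n}" "\<lambda>k. ff (k, n)" "\<lambda>k. ff (k, n)"] by blast
    moreover have "(\<Sum>k\<in>{0..n}. ff (k, n)) = (A oo G) $ n * y ^ n"
      by (simp add: ff_def fps_compose_nth sum_distrib_right)
    ultimately show ?thesis by simp
  qed
  ultimately have "((\<lambda>n. (A oo G) $ n * y ^ n) has_sum f) UNIV"
    using has_sum_SigmaD[where B = "\<lambda>_. UNIV" and A=UNIV and f="\<lambda>(n, k). ff (k, n)"] by auto
  then show ?thesis by (rule has_sum_imp_sums)
qed

lemma compare:
  fixes P P' :: "real \<Rightarrow> real" and L y0 :: real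
  assumes P0: "P 0 < 2"
    and der: "\<And>t. (P has_real_derivative P' t) (at t)"
    and crit: "\<And>t. 0 \<le> t \<Longrightarrow> t \<le> y0 \<Longrightarrow> P t = 2 + L * t \<Longrightarrow> P' t < L"
    and t: "0 \<le> t" "t \<le> y0"
  shows "P t < 2 + L * t"
proof (rule ccontr)
  assume "\<not> P t < 2 + L * t"
  define d where "d = (\<lambda>t. P t - (2 + L * t))"
  have dder: "(d has_real_derivative (P' t - L)) (at t)" for t
    unfolding d_def by (auto intro!: derivative_eq_intros der)
  have dcont: "isCont d t" for t using dder by (rule DERIV_isCont)
  define SS where "SS = {t. 0 \<le> t \<and> t \<le> y0 \<and> d t \<ge> 0}"
  have ne: "SS \<noteq> {}" using t \<open>\<not> P t < 2 + L * t\<close> by (auto simp: SS_def d_def)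
  have bdd: "bdd_below SS" by (auto simp: SS_def bdd_below_def)
  have cl: "closed SS"
  proof -
    have "SS = {0..y0} \<inter> d -` {0..}" by (auto simp: SS_def)
    moreover have "closed (d -` {0..})"
      by (rule continuous_closed_vimage) (auto intro: dcont)
    ultimately show ?thesis by auto
  qed
  define t0 where "t0 = Inf SS"
  have t0S: "t0 \<in> SS" using closed_contains_Inf[OF ne bdd cl] by (simp add: t0_def)
  have below: "d s < 0" if "0 \<le> s" "s < t0" for s
  proof (rule ccontr)
    assume "\<not> d s < 0"
    then have "s \<in> SS" using that t0S by (auto simp: SS_def)
    then have "t0 \<le> s" unfolding t0_def by (rule cInf_lower[OF _ bdd])
    then show False using that by auto
  qed
  have d0: "d 0 < 0" using P0 by (simp add: d_def)
  have "\<exists>x\<ge>0. x \<le> t0 \<and> d x = 0"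
    by (rule IVT) (use d0 t0S dcont in \<open>auto simp: SS_def\<close>)
  then obtain x where x: "0 \<le> x" "x \<le> t0" "d x = 0" by blast
  have "x = t0" using below[of x] x by force
  then have dt0: "d t0 = 0" using x by simp
  have t0pos: "t0 > 0" using t0S d0 dt0 by (cases "t0 = 0") (auto simp: SS_def)
  have "P t0 = 2 + L * t0" using dt0 by (simp add: d_def)
  then have "P' t0 - L < 0" using crit[of t0] t0S by (auto simp: SS_def)
  from DERIV_neg_dec_left[OF dder this]
  obtain \<delta> where \<delta>: "\<delta> > 0" "\<And>h. h > 0 \<Longrightarrow> h < \<delta> \<Longrightarrow> d t0 < d (t0 - h)" by blast
  define h where "h = min \<delta> t0 / 2"
  have "h > 0" "h < \<delta>" "h \<le> t0" using \<delta> t0pos by (auto simp: h_def)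
  then have "d t0 < d (t0 - h)" using \<delta> by auto
  moreover have "d (t0 - h) < 0" using below[of "t0 - h"] \<open>h > 0\<close> \<open>h \<le> t0\<close> by auto
  ultimately show False using dt0 by simp
qed



lemma core:
  fixes a :: "nat \<Rightarrow> real" and R :: real
  assumes R: "R > 0" and an: "\<And>k. a k \<ge> 0"
    and summ: "\<And>x. 0 \<le> x \<Longrightarrow> x < R \<Longrightarrow> summable (\<lambda>k. a k * x ^ k)"
  shows "\<exists>y0 Hf Gf E. y0 > 0 \<and> (\<forall>n. E n \<ge> 0) \<and>
     (\<forall>y\<in>{0..<y0}. 1 \<le> Hf y \<and> y * Hf y < R \<and>
        (Hf has_real_derivative (Hf y)^2 * (\<Sum>k. a k * (y * Hf y) ^ k)) (at y) \<and>
        (Gf has_real_derivative Hf y) (at y) \<and> (\<lambda>n. E n * y ^ n) sums exp (Gf y))"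
proof -
  define Uf where "Uf = (\<lambda>x. \<Sum>k. a k * x ^ k)"
  define h where "h = hs a"
  define H where "H = Abs_fps h"
  have hn: "h n \<ge> 0" for n using hs_nonneg[OF an] by (simp add: h_def)
  have h0: "h 0 = 1" by (simp add: h_def hs_0)
  have hSuc: "real (Suc n) * h (Suc n) = RHS a H $ n" for n
    using hs_Suc[of n a] by (simp add: h_def H_def)
  have nnH: "nnf H" using hn by (simp add: nnf_def H_def)
  have Uf_nonneg: "Uf x \<ge> 0" if "0 \<le> x" "x < R" for x
    unfolding Uf_def by (rule suminf_nonneg[OF summ[OF that]]) (use an that in auto)
  have Uf_mono: "Uf x \<le> Uf x'" if "0 \<le> x" "x \<le> x'" "x' < R" for x x'
    unfolding Uf_def
  proof (rule suminf_le)
    show "a n * x ^ n \<le> a n * x' ^ n" for n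
      using that an by (intro mult_left_mono power_mono) auto
  qed (use summ that in auto)
  have RHS_sums: "(\<lambda>n. RHS a F $ n * y ^ n) sums (P ^ 2 * Uf (y * P))"
    if F: "nnf F" and y: "y \<ge> 0" and s: "(\<lambda>n. F $ n * y ^ n) sums P" and yP: "y * P < R" for F y P
  proof -
    have P: "P \<ge> 0"
      by (rule sums_le[OF _ sums_zero s]) (use F y in \<open>auto simp: nnf_def\<close>)
    have c: "(\<lambda>n. (Abs_fps a oo (fps_X * F)) $ n * y ^ n) sums Uf (y * P)"
    proof (rule sums_fps_compose)
      show "nnf (Abs_fps a)" using an by (simp add: nnf_def)
      show "nnf (fps_X * F)" using F by (rule nnf_X)
      show "(\<lambda>n. (fps_X * F) $ n * y ^ n) sums (y * P)" using s by (rule sums_fps_X)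
      show "(\<lambda>k. Abs_fps a $ k * (y * P) ^ k) sums Uf (y * P)"
        unfolding Uf_def using summ[of "y * P"] P y yP by (auto intro: summable_sums)
    qed (use y in auto)
    have "(\<lambda>n. (F ^ 2 * (Abs_fps a oo (fps_X * F))) $ n * y ^ n) sums (P ^ 2 * Uf (y * P))"
    proof (rule sums_fps_mult[OF _ _ y sums_fps_power[OF F y s] c])
      show "nnf (F ^ 2)" using F by (rule nnf_power)
      show "nnf (Abs_fps a oo fps_X * F)"
        using F an by (intro nnf_compose nnf_X) (auto simp: nnf_def)
    qed
    then show ?thesis by (simp add: RHS_def)
  qed
  define TN where "TN = (\<lambda>N. Abs_fps (\<lambda>n. if n \<le> N then h n else 0))"
  define PN where "PN = (\<lambda>N y. \<Sum>n<Suc N. h n * y ^ n)"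
  have TN_sums: "(\<lambda>n. TN N $ n * y ^ n) sums PN N y" for N y
  proof -
    have "(\<lambda>n. TN N $ n * y ^ n) sums (\<Sum>n\<in>{..<Suc N}. TN N $ n * y ^ n)"
      by (rule sums_finite) (auto simp: TN_def)
    then show ?thesis by (simp add: PN_def TN_def)
  qed
  have nnTN: "nnf (TN N)" for N using hn by (auto simp: nnf_def TN_def)
  have PN_der: "(PN N has_real_derivative (\<Sum>n<N. RHS a H $ n * y ^ n)) (at y)" for N y
  proof -
    have "(PN N has_real_derivative (\<Sum>n<Suc N. h n * (real n * y ^ (n - 1)))) (at y)"
      unfolding PN_def by (auto intro!: derivative_eq_intros sum.cong simp: mult_ac)
    also have "(\<Sum>n<Suc N. h n * (real n * y ^ (n - 1))) = (\<Sum>n<N. RHS a H $ n * y ^ n)"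
    proof -
      have "(\<Sum>n<Suc N. h n * (real n * y ^ (n - 1))) = (\<Sum>n<N. h (Suc n) * (real (Suc n) * y ^ n))"
        by (subst sum.lessThan_Suc_shift) simp
      also have "\<dots> = (\<Sum>n<N. RHS a H $ n * y ^ n)"
        by (intro sum.cong refl) (simp flip: hSuc)
      finally show ?thesis .
    qed
    finally show ?thesis .
  qed
  have PN_le: "(\<Sum>n<N. RHS a H $ n * y ^ n) \<le> (PN N y) ^ 2 * Uf (y * PN N y)"
    if y: "0 \<le> y" "y * PN N y < R" for N y
  proof -
    have eq: "equpto N H (TN N)" by (simp add: equpto_def H_def TN_def)
    have "(\<Sum>n<N. RHS a H $ n * y ^ n) = (\<Sum>n<N. RHS a (TN N) $ n * y ^ n)"
      using equpto_RHS[OF eq, of a] by (auto simp: equpto_def intro!: sum.cong)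
    also have "\<dots> \<le> (\<Sum>n. RHS a (TN N) $ n * y ^ n)"
    proof (rule sum_le_suminf)
      show "summable (\<lambda>n. RHS a (TN N) $ n * y ^ n)"
        using RHS_sums[OF nnTN y(1) TN_sums y(2)] by (simp add: sums_iff)
      show "0 \<le> RHS a (TN N) $ n * y ^ n" for n
        using nnf_RHS[OF an nnTN[of N]] y by (auto simp: nnf_def)
    qed simp
    also have "\<dots> = (PN N y) ^ 2 * Uf (y * PN N y)"
      using RHS_sums[OF nnTN y(1) TN_sums y(2)] by (simp add: sums_iff)
    finally show ?thesis .
  qed
  define M where "M = Uf (R / 2)"
  define L where "L = 9 * M + 1"
  define y0 where "y0 = min (1 / L) (R / 6)"
  have M0: "M \<ge> 0" unfolding M_def using R by (intro Uf_nonneg) auto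
  have L1: "L \<ge> 1" using M0 by (simp add: L_def)
  have y0pos: "y0 > 0" using L1 R by (simp add: y0_def)
  have Ly0: "L * y0 \<le> 1" using L1 by (simp add: y0_def min_def field_simps)
  have Ry0: "6 * y0 \<le> R" by (simp add: y0_def min_def)
  have bound: "PN N t < 2 + L * t" if t: "0 \<le> t" "t \<le> y0" for N t
  proof (rule compare[OF _ PN_der _ t])
    have "PN N 0 = h 0" unfolding PN_def by (induction N) simp_all
    then show "PN N 0 < 2" using h0 by simp
  next
    fix t assume t: "0 \<le> t" "t \<le> y0" and eq: "PN N t = 2 + L * t"
    have "L * t \<le> 1" using Ly0 t L1 by (meson dual_order.trans mult_left_mono order.trans zero_le_one)
    then have P3: "PN N t \<le> 3" "PN N t \<ge> 0" using eq t L1 by auto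
    have "t * PN N t \<le> t * 3" using P3 t by (intro mult_left_mono) auto
    then have tP: "t * PN N t \<le> R / 2" using t Ry0 by linarith
    have "(\<Sum>n<N. RHS a H $ n * t ^ n) \<le> (PN N t) ^ 2 * Uf (t * PN N t)"
      by (rule PN_le) (use t tP R in auto)
    also have "\<dots> \<le> 9 * M"
    proof (rule mult_mono)
      show "(PN N t) ^ 2 \<le> 9" using power_mono[OF P3(1) P3(2), of 2] by simp
      show "Uf (t * PN N t) \<le> M" unfolding M_def using tP t P3 R by (intro Uf_mono) auto
      show "0 \<le> Uf (t * PN N t)" using tP t P3 R by (intro Uf_nonneg) auto
    qed simp
    also have "\<dots> < L" by (simp add: L_def)
    finally show "(\<Sum>n<N. RHS a H $ n * t ^ n) < L" .
  qed
  have hy: "h n * y ^ n \<ge> 0" if "y \<ge> 0" for n y using hn that by simp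
  have sum_y0: "summable (\<lambda>n. h n * y0 ^ n)"
  proof (rule summableI_nonneg_bounded)
    fix n
    have "(\<Sum>i<n. h i * y0 ^ i) \<le> PN n y0"
      unfolding PN_def using hy[of y0] y0pos by (simp add: add_increasing2 less_imp_le)
    also have "\<dots> < 2 + L * y0" using bound[of y0 n] y0pos by simp
    also have "\<dots> \<le> 3" using Ly0 by simp
    finally show "(\<Sum>i<n. h i * y0 ^ i) \<le> 3" by simp
  qed (use hy y0pos in auto)
  define Hf where "Hf = (\<lambda>y. \<Sum>n. h n * y ^ n)"
  have sum_y: "summable (\<lambda>n. h n * y ^ n)" if "0 \<le> y" "y \<le> y0" for y
    by (rule summable_comparison_test'[OF sum_y0, of 0]) (use that hn in \<open>auto intro!: mult_left_mono power_mono\<close>)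
  have Hf3: "Hf y \<le> 3" if "0 \<le> y" "y \<le> y0" for y
    unfolding Hf_def
  proof (rule suminf_le_const[OF sum_y[OF that]])
    fix n
    have "(\<Sum>i<n. h i * y ^ i) \<le> PN n y"
      unfolding PN_def using hy[of y] that by (simp add: add_increasing2)
    also have "\<dots> < 2 + L * y" using bound[of y n] that by simp
    also have "\<dots> \<le> 3" using Ly0 that L1
      by (smt (verit, best) mult_left_mono)
    finally show "(\<Sum>i<n. h i * y ^ i) \<le> 3" by simp
  qed
  have Hf1: "Hf y \<ge> 1" if "0 \<le> y" "y \<le> y0" for y
  proof -
    have "(\<Sum>i\<in>{..<1}. h i * y ^ i) \<le> Hf y"
      unfolding Hf_def by (rule sum_le_suminf[OF sum_y[OF that]]) (use hy that in auto)
    then show ?thesis using h0 by simp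
  qed
  have HfR: "y * Hf y < R" if "0 \<le> y" "y < y0" for y
  proof -
    have "y * Hf y \<le> y * 3" using Hf3[of y] that by (intro mult_left_mono) auto
    then show ?thesis using that Ry0 R by linarith
  qed
  have Hf_der: "(Hf has_real_derivative (Hf y)^2 * Uf (y * Hf y)) (at y)" if y: "0 \<le> y" "y < y0" for y
  proof -
    have "(Hf has_real_derivative (\<Sum>n. diffs h n * y ^ n)) (at y)"
      unfolding Hf_def by (rule termdiffs_strong[OF sum_y0]) (use y in auto)
    moreover have "(\<lambda>n. diffs h n * y ^ n) sums ((Hf y)^2 * Uf (y * Hf y))"
    proof -
      have "(\<lambda>n. H $ n * y ^ n) sums Hf y"
        unfolding Hf_def H_def using sum_y[of y] y by (simp add: summable_sums)
      moreover have "diffs h n = RHS a H $ n" for n using hSuc[of n] by (simp add: diffs_def)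
      ultimately show ?thesis using RHS_sums[OF nnH y(1) _ HfR[OF y]] by simp
    qed
    ultimately show ?thesis by (simp add: sums_iff)
  qed
  define gc where "gc = (\<lambda>n. if n = 0 then 0 else h (n - 1) / real n)"
  have gcn: "gc n \<ge> 0" for n using hn by (simp add: gc_def)
  have sum_gc: "summable (\<lambda>n. gc n * y0 ^ n)"
  proof (subst summable_Suc_iff[symmetric])
    show "summable (\<lambda>n. gc (Suc n) * y0 ^ Suc n)"
    proof (rule summable_comparison_test'[OF summable_mult[OF sum_y0, of y0], of 0])
      fix n
      have "gc (Suc n) * y0 ^ Suc n = y0 * (h n * y0 ^ n) / real (Suc n)"
        by (simp add: gc_def)
      also have "\<dots> \<le> y0 * (h n * y0 ^ n)"
        using divide_left_mono[of 1 "real (Suc n)" "y0 * (h n * y0 ^ n)"] hy[of y0] y0pos by simp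
      finally show "norm (gc (Suc n) * y0 ^ Suc n) \<le> y0 * (h n * y0 ^ n)"
        using gcn[of "Suc n"] y0pos by simp
    qed
  qed
  define Gf where "Gf = (\<lambda>y. \<Sum>n. gc n * y ^ n)"
  have Gf_der: "(Gf has_real_derivative Hf y) (at y)" if y: "0 \<le> y" "y < y0" for y
  proof -
    have "(Gf has_real_derivative (\<Sum>n. diffs gc n * y ^ n)) (at y)"
      unfolding Gf_def by (rule termdiffs_strong[OF sum_gc]) (use y in auto)
    moreover have "diffs gc n = h n" for n by (simp add: diffs_def gc_def)
    ultimately show ?thesis by (simp add: Hf_def)
  qed
  define expA :: "real fps" where "expA = Abs_fps (\<lambda>k. 1 / fact k)"
  define E where "E = (\<lambda>n. (expA oo Abs_fps gc) $ n)"
  have En: "E n \<ge> 0" for n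
    using nnf_compose[of expA "Abs_fps gc"] gcn by (auto simp: E_def nnf_def expA_def)
  have E_sums: "(\<lambda>n. E n * y ^ n) sums exp (Gf y)" if y: "0 \<le> y" "y < y0" for y
    unfolding E_def
  proof (rule sums_fps_compose)
    show "nnf expA" by (simp add: nnf_def expA_def)
    show "nnf (Abs_fps gc)" using gcn by (simp add: nnf_def)
    show "Abs_fps gc $ 0 = 0" by (simp add: gc_def)
    show "(\<lambda>n. Abs_fps gc $ n * y ^ n) sums Gf y"
      unfolding Gf_def using y
      by (auto intro!: summable_sums summable_comparison_test'[OF sum_gc, of 0] mult_left_mono power_mono simp: gcn)
    show "(\<lambda>k. expA $ k * Gf y ^ k) sums exp (Gf y)"
      using exp_converges[of "Gf y"] by (simp add: expA_def divide_inverse_commute scaleR_conv_of_real)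
  qed (use y in auto)
  show ?thesis
  proof (intro exI conjI ballI)
    show "y0 > 0" by (rule y0pos)
    show "\<forall>n. E n \<ge> 0" using En by auto
  next
    fix y :: real assume "y \<in> {0..<y0}"
    then have y: "0 \<le> y" "y < y0" by auto
    show "1 \<le> Hf y" using Hf1 y by auto
    show "y * Hf y < R" using HfR y by auto
    show "(Hf has_real_derivative (Hf y)^2 * (\<Sum>k. a k * (y * Hf y) ^ k)) (at y)"
      using Hf_der[OF y] by (simp add: Uf_def)
    show "(Gf has_real_derivative Hf y) (at y)" using Gf_der[OF y] .
    show "(\<lambda>n. E n * y ^ n) sums exp (Gf y)" using E_sums[OF y] .
  qed
qed


theorem theorem3:
  fixes a :: "nat \<Rightarrow> real" and U V S B :: "real \<Rightarrow> real" and R :: real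
  assumes R_pos: "R > 0"
    and a_nonneg: "\<And>k. a k \<ge> 0"
    and U_ps: "\<And>x. x \<in> {0<..<R} \<Longrightarrow> (\<lambda>k. a k * x ^ k) sums U x"
    and V_def: "\<And>x. V x = x * (1 + x * U x)"
    and S_antider: "\<And>z. z \<in> {0<..<R} \<Longrightarrow> (S has_real_derivative 1 / V z) (at z)"
    and B_antider: "\<And>z. z \<in> {0<..<R} \<Longrightarrow> (B has_real_derivative z / V z) (at z)"
  shows "\<exists>c r. r > 0 \<and> (\<forall>k. c k \<ge> 0) \<and>
           {0<..<r} \<subseteq> (\<lambda>z. exp (S z)) ` {0<..<R} \<and>
           (\<forall>y\<in>{0<..<r}. (\<lambda>k. c k * y ^ k) sums
               exp (B (the_inv_into {0<..<R} (\<lambda>z. exp (S z)) y))) \<and>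
           (\<forall>x\<in>psd_mean c ` {0<..<r}. psd_cov c r x = V x)"
proof -
  have summ: "summable (\<lambda>k. a k * x ^ k)" if "0 \<le> x" "x < R" for x
  proof (cases "x = 0")
    case True then show ?thesis using powser_sums_zero[of a] by (simp add: sums_iff)
  next
    case False then show ?thesis using U_ps[of x] that by (simp add: sums_iff)
  qed
  have U_eq: "U x = (\<Sum>k. a k * x ^ k)" if "x \<in> {0<..<R}" for x
    using U_ps[OF that] by (simp add: sums_iff)
  have U_nonneg: "U x \<ge> 0" if "x \<in> {0<..<R}" for x
    by (rule sums_le[OF _ sums_zero U_ps[OF that]]) (use a_nonneg that in simp)
  have V_pos: "V x > 0" if "x \<in> {0<..<R}" for x
    using U_nonneg[OF that] that by (simp add: V_def add_pos_nonneg)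
  obtain y0 Hf Gf E where y0E: "y0 > 0 \<and> (\<forall>n. E n \<ge> 0) \<and>
     (\<forall>y\<in>{0..<y0}. 1 \<le> Hf y \<and> y * Hf y < R \<and>
        (Hf has_real_derivative (Hf y)^2 * (\<Sum>k. a k * (y * Hf y) ^ k)) (at y) \<and>
        (Gf has_real_derivative Hf y) (at y) \<and> (\<lambda>n. E n * y ^ n) sums exp (Gf y))"
    using core[OF R_pos a_nonneg, of "\<lambda>x. x"] summ by blast
  have y0: "y0 > 0" and En: "\<forall>n. E n \<ge> 0" using y0E by auto
  have HP: "1 \<le> Hf y \<and> y * Hf y < R \<and>
        (Hf has_real_derivative (Hf y)^2 * (\<Sum>k. a k * (y * Hf y) ^ k)) (at y) \<and>
        (Gf has_real_derivative Hf y) (at y) \<and> (\<lambda>n. E n * y ^ n) sums exp (Gf y)"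
    if "y\<in>{0..<y0}" for y
    using y0E that by blast
  define Z where "Z = (\<lambda>y. y * Hf y)"
  have Zin: "Z y \<in> {0<..<R}" if "y \<in> {0<..<y0}" for y
  proof -
    have y: "0 < y" "y < y0" using that by auto
    have "1 \<le> Hf y" "y * Hf y < R" using HP[of y] y by auto
    moreover have "0 < y * Hf y" using y \<open>1 \<le> Hf y\<close> by (intro mult_pos_pos) auto
    ultimately show ?thesis by (simp add: Z_def)
  qed
  have Z_der: "(Z has_real_derivative Hf y * (1 + Z y * U (Z y))) (at y)" if y: "y \<in> {0<..<y0}" for y
  proof -
    have "(Z has_real_derivative (Hf y + y * ((Hf y)^2 * U (Z y)))) (at y)"
      using HP[of y] y U_eq[OF Zin[OF y]] unfolding Z_def
      by (auto intro!: derivative_eq_intros)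
    then show ?thesis by (simp add: Z_def algebra_simps power2_eq_square)
  qed
  have SZ_der: "((\<lambda>y. S (Z y) - ln y) has_real_derivative 0) (at y within {0<..<y0})"
    if y: "y \<in> {0<..<y0}" for y
  proof -
    have "((\<lambda>y. S (Z y) - ln y) has_real_derivative (1 / V (Z y) * (Hf y * (1 + Z y * U (Z y))) - 1 / y)) (at y)"
      using DERIV_diff[OF DERIV_chain2[OF S_antider[OF Zin[OF y]] Z_der[OF y]] DERIV_ln_divide[of y]] y
      by simp
    moreover have "1 / V (Z y) * (Hf y * (1 + Z y * U (Z y))) - 1 / y = 0"
    proof -
      have p: "1 + Z y * U (Z y) > 0" "Hf y > 0" "y > 0"
        using U_nonneg[OF Zin[OF y]] Zin[OF y] HP[of y] y by (auto intro: add_pos_nonneg)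
      have "1 / V (Z y) * (Hf y * (1 + Z y * U (Z y))) =
            (Hf y * (1 + Z y * U (Z y))) / (y * Hf y * (1 + Z y * U (Z y)))"
        by (simp add: V_def Z_def)
      also have "\<dots> = (Hf y * (1 + Z y * U (Z y))) / (y * (Hf y * (1 + Z y * U (Z y))))"
        by (simp add: mult.assoc)
      also have "\<dots> = 1 / y" using p by simp
      finally show ?thesis by simp
    qed
    ultimately show ?thesis by (auto intro: has_field_derivative_at_within)
  qed
  obtain K1 where K1: "\<And>y. y \<in> {0<..<y0} \<Longrightarrow> S (Z y) - ln y = K1"
    using has_field_derivative_zero_constant[OF convex_real_interval(8) SZ_der] by blast
  have BZ_der: "((\<lambda>y. B (Z y) - Gf y) has_real_derivative 0) (at y within {0<..<y0})"
    if y: "y \<in> {0<..<y0}" for y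
  proof -
    have "((\<lambda>y. B (Z y) - Gf y) has_real_derivative (Z y / V (Z y) * (Hf y * (1 + Z y * U (Z y))) - Hf y)) (at y)"
      using DERIV_diff[OF DERIV_chain2[OF B_antider[OF Zin[OF y]] Z_der[OF y]], of Gf "Hf y"] y HP[of y]
      by simp
    moreover have "Z y / V (Z y) * (Hf y * (1 + Z y * U (Z y))) - Hf y = 0"
    proof -
      have p: "1 + Z y * U (Z y) > 0" "Hf y > 0" "y > 0"
        using U_nonneg[OF Zin[OF y]] Zin[OF y] HP[of y] y by (auto intro: add_pos_nonneg)
      have "Z y / V (Z y) * (Hf y * (1 + Z y * U (Z y))) =
            (y * Hf y) * (Hf y * (1 + Z y * U (Z y))) / (y * Hf y * (1 + Z y * U (Z y)))"
        by (simp add: V_def Z_def)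
      also have "\<dots> = Hf y * ((y * (Hf y * (1 + Z y * U (Z y)))) / (y * (Hf y * (1 + Z y * U (Z y)))))"
        by (simp add: mult.assoc mult.left_commute)
      also have "\<dots> = Hf y" using p by simp
      finally show ?thesis by simp
    qed
    ultimately show ?thesis by (auto intro: has_field_derivative_at_within)
  qed
  obtain K2 where K2: "\<And>y. y \<in> {0<..<y0} \<Longrightarrow> B (Z y) - Gf y = K2"
    using has_field_derivative_zero_constant[OF convex_real_interval(8) BZ_der] by blast
  define q where "q = exp (- K1)"
  define r where "r = y0 / q"
  define c where "c = (\<lambda>k. exp K2 * E k * q ^ k)"
  define s where "s = (\<lambda>z. exp (S z))"
  define T where "T = (\<lambda>y. Z (q * y))"
  have q: "q > 0" by (simp add: q_def)
  have r: "r > 0" using y0 q by (simp add: r_def)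
  have qy: "q * y \<in> {0<..<y0}" if "y \<in> {0<..<r}" for y
    using that q by (auto simp: r_def field_simps)
  have TR: "T y \<in> {0<..<R}" if "y \<in> {0<..<r}" for y using Zin[OF qy[OF that]] by (simp add: T_def)
  have sT: "s (T y) = y" if y: "y \<in> {0<..<r}" for y
  proof -
    have "S (T y) = ln (q * y) + K1" using K1[OF qy[OF y]] by (simp add: T_def)
    then have "s (T y) = exp (ln (q * y)) * exp K1" by (simp add: s_def exp_add)
    also have "\<dots> = q * y * exp K1" using q y by simp
    also have "\<dots> = y" by (simp add: q_def exp_minus)
    finally show ?thesis .
  qed
  have S_cont: "isCont S x" if "x \<in> {0<..<R}" for x
    using S_antider[OF that] by (rule DERIV_isCont)
  have S_mono: "S x1 < S x2" if x: "x1 \<in> {0<..<R}" "x2 \<in> {0<..<R}" "x1 < x2" for x1 x2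
  proof (rule DERIV_pos_imp_increasing_open[OF x(3)])
    fix x assume "x1 < x" "x < x2"
    then have xin: "x \<in> {0<..<R}" using x by auto
    then show "\<exists>y. (S has_real_derivative y) (at x) \<and> 0 < y"
      using S_antider[OF xin] V_pos[OF xin] by auto
  next
    show "continuous_on {x1..x2} S"
      by (rule continuous_at_imp_continuous_on) (use x S_cont in auto)
  qed
  have s_inj: "inj_on s {0<..<R}"
  proof (rule inj_onI)
    fix x1 x2 assume x: "x1 \<in> {0<..<R}" "x2 \<in> {0<..<R}" and "s x1 = s x2"
    then have "S x1 = S x2" by (simp add: s_def)
    then show "x1 = x2" using S_mono[OF x] S_mono[OF x(2,1)] by (cases x1 x2 rule: linorder_cases) auto
  qed
  have inv: "the_inv_into {0<..<R} s y = T y" if "y \<in> {0<..<r}" for y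
    by (rule the_inv_into_f_eq[OF s_inj sT[OF that] TR[OF that]])
  define Om where "Om = (\<lambda>y. exp K2 * exp (Gf (q * y)))"
  have Om_B: "Om y = exp (B (T y))" if "y \<in> {0<..<r}" for y
    using K2[OF qy[OF that]] by (simp add: Om_def T_def exp_add[symmetric])
  have c_sums: "(\<lambda>k. c k * y ^ k) sums Om y" if y: "y \<in> {0<..<r}" for y
  proof -
    have "(\<lambda>n. E n * (q * y) ^ n) sums exp (Gf (q * y))" using HP[of "q * y"] qy[OF y] by auto
    from sums_mult[OF this, of "exp K2"] show ?thesis
      by (simp add: Om_def c_def power_mult_distrib mult_ac)
  qed
  have Om_pos: "Om y > 0" for y by (simp add: Om_def)
  have Om_der: "(Om has_real_derivative Om y * (Hf (q * y) * q)) (at y)" if y: "y \<in> {0<..<r}" for y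
  proof -
    have g: "(Gf has_real_derivative Hf (q * y)) (at (q * y))" using HP[of "q * y"] qy[OF y] by auto
    have "((\<lambda>y. Gf (q * y)) has_real_derivative Hf (q * y) * q) (at y)"
    proof -
      have "((\<lambda>y. q * y) has_real_derivative q) (at y)" by (auto intro!: derivative_eq_intros)
      from DERIV_chain2[OF g this] show ?thesis .
    qed
    then show ?thesis unfolding Om_def
      by (auto intro!: derivative_eq_intros simp: mult_ac)
  qed
  have ps_eq: "ps_fun c y = Om y" if "y \<in> {0<..<r}" for y
    using c_sums[OF that] by (simp add: ps_fun_def sums_iff)
  have mean_eq: "psd_mean c y = T y" if y: "y \<in> {0<..<r}" for y
  proof -
    have "(ps_fun c has_real_derivative Om y * (Hf (q * y) * q)) (at y)"
      by (rule has_field_derivative_transform_within_open[OF Om_der[OF y] open_greaterThanLessThan y])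
         (simp add: ps_eq)
    then have "deriv (ps_fun c) y = Om y * (Hf (q * y) * q)" by (rule DERIV_imp_deriv)
    then have "psd_mean c y = y * (Om y * (Hf (q * y) * q)) / Om y"
      by (simp add: psd_mean_def ps_eq[OF y])
    also have "\<dots> = q * y * Hf (q * y)" using Om_pos[of y] by (simp add: field_simps)
    finally show ?thesis by (simp add: T_def Z_def)
  qed
  have mean_inj: "inj_on (psd_mean c) {0<..<r}"
  proof (rule inj_onI)
    fix y1 y2 assume y: "y1 \<in> {0<..<r}" "y2 \<in> {0<..<r}" and "psd_mean c y1 = psd_mean c y2"
    then have "T y1 = T y2" by (simp add: mean_eq)
    then show "y1 = y2" using sT[OF y(1)] sT[OF y(2)] by metis
  qed
  have cov: "psd_cov c r x = V x" if x: "x \<in> psd_mean c ` {0<..<r}" for x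
  proof -
    obtain y1 where y1: "y1 \<in> {0<..<r}" and xT: "x = T y1" using x mean_eq by auto
    define f where "f = the_inv_into {0<..<r} (psd_mean c)"
    define Ow where "Ow = s -` {..<r} \<inter> {0<..<R}"
    have s_cont: "continuous_on {0<..<R} s"
      unfolding s_def by (intro continuous_at_imp_continuous_on ballI continuous_intros S_cont) auto
    have Oopen: "open Ow"
      using s_cont unfolding Ow_def by (subst (asm) continuous_on_open_vimage) auto
    have fO: "f x' = s x'" if x': "x' \<in> Ow" for x'
    proof -
      have y': "s x' \<in> {0<..<r}" using x' by (auto simp: Ow_def s_def)
      have "T (s x') = x'" using s_inj TR[OF y'] sT[OF y'] x' unfolding Ow_def
        by (metis IntD2 inj_onD)
      then have "psd_mean c (s x') = x'" using mean_eq[OF y'] by simp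
      then show ?thesis unfolding f_def using the_inv_into_f_f[OF mean_inj y'] by simp
    qed
    have xin: "x \<in> {0<..<R}" using TR[OF y1] xT by simp
    have xO: "x \<in> Ow" using xin sT[OF y1] y1 xT by (auto simp: Ow_def)
    have sder: "(s has_real_derivative exp (S x) * (1 / V x)) (at x)"
      unfolding s_def using S_antider[OF xin] by (auto intro!: derivative_eq_intros)
    have "(f has_real_derivative exp (S x) * (1 / V x)) (at x)"
      by (rule has_field_derivative_transform_within_open[OF sder Oopen xO]) (simp add: fO)
    then have "deriv f x = exp (S x) * (1 / V x)" by (rule DERIV_imp_deriv)
    moreover have "f x = exp (S x)" using fO[OF xO] by (simp add: s_def)
    ultimately have "psd_cov c r x = exp (S x) / (exp (S x) * (1 / V x))"
      by (simp add: psd_cov_def f_def Let_def)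
    also have "\<dots> = V x" using V_pos[OF xin] by simp
    finally show ?thesis .
  qed
  show ?thesis
    unfolding s_def[symmetric]
  proof (intro exI conjI ballI)
    show "r > 0" by (rule r)
    show "\<forall>k. 0 \<le> c k" using En q by (auto simp: c_def)
    show "{0<..<r} \<subseteq> s ` {0<..<R}"
    proof
      fix y assume "y \<in> {0<..<r}"
      then show "y \<in> s ` {0<..<R}" using sT TR by (metis image_eqI)
    qed
  next
    fix y assume y: "y \<in> {0<..<r}"
    show "(\<lambda>k. c k * y ^ k) sums exp (B (the_inv_into {0<..<R} s y))"
      using c_sums[OF y] by (simp add: inv[OF y] Om_B[OF y])
  next
    fix x assume "x \<in> psd_mean c ` {0<..<r}"
    then show "psd_cov c r x = V x" by (rule cov)
  qed
qed

end
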